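(* Let $g\in G=\mathrm{PSL}(2,\mathbb{C})^q\times\mathrm{PSL}(2,\mathbb{R})^r$ be elliptic of infinite order and $h\in G$ loxodromic. Then there are positive integers $m,n$ such that $g^mh^n$ and $h^ng^m$ are loxodromic.
   Context: An element $g=(g_1,\dots,g_{q+r})\in G$ is elliptic (resp. loxodromic) if every component $g_i$ is an elliptic (resp. loxodromic) element of $\mathrm{PSL}(2,\mathbb{C})$. *)

theory Defs
  imports "HOL-Analysis.Analysis"
begin

(* Elements of PSL(2,C) are represented by lifts in SL(2,C), i.e. 2x2 complex
   matrices of determinant 1; A and -A represent the same element.  All notions
   below are invariant under A \<mapsto> -A and compatible with products/powers. *)

type_synonym cmat = "complex^2^2"

definition SL2C :: "cmat set" where
  "SL2C = {A. det A = 1}"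

(* lifts of PSL(2,R): real determinant-one matrices *)
definition SL2R :: "cmat set" where
  "SL2R = {A. det A = 1 \<and> (\<forall>i j. Im (A $ i $ j) = 0)}"

fun mpow :: "cmat \<Rightarrow> nat \<Rightarrow> cmat" where
  "mpow A 0 = mat 1"
| "mpow A (Suc k) = A ** mpow A k"

definition elliptic :: "cmat \<Rightarrow> bool" where
  "elliptic A \<longleftrightarrow> Im (trace A) = 0 \<and> \<bar>Re (trace A)\<bar> < 2"

(* loxodromic element of PSL(2,C): trace^2 \<notin> [0,4] *)
definition loxodromic :: "cmat \<Rightarrow> bool" where
  "loxodromic A \<longleftrightarrow> \<not> (Im (trace A) = 0 \<and> \<bar>Re (trace A)\<bar> \<le> 2)"

(* G = PSL(2,C)^q \<times> PSL(2,R)^r, elements as index functions on {0..<q+r} *)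
definition inG :: "nat \<Rightarrow> nat \<Rightarrow> (nat \<Rightarrow> cmat) \<Rightarrow> bool" where
  "inG q r g \<longleftrightarrow> (\<forall>i<q. g i \<in> SL2C) \<and> (\<forall>i. q \<le> i \<and> i < q + r \<longrightarrow> g i \<in> SL2R)"

definition G_mult :: "(nat \<Rightarrow> cmat) \<Rightarrow> (nat \<Rightarrow> cmat) \<Rightarrow> (nat \<Rightarrow> cmat)" where
  "G_mult g h = (\<lambda>i. g i ** h i)"

definition G_pow :: "(nat \<Rightarrow> cmat) \<Rightarrow> nat \<Rightarrow> (nat \<Rightarrow> cmat)" where
  "G_pow g k = (\<lambda>i. mpow (g i) k)"

definition G_elliptic :: "nat \<Rightarrow> nat \<Rightarrow> (nat \<Rightarrow> cmat) \<Rightarrow> bool" where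
  "G_elliptic q r g \<longleftrightarrow> (\<forall>i<q+r. elliptic (g i))"

definition G_loxodromic :: "nat \<Rightarrow> nat \<Rightarrow> (nat \<Rightarrow> cmat) \<Rightarrow> bool" where
  "G_loxodromic q r g \<longleftrightarrow> (\<forall>i<q+r. loxodromic (g i))"

definition G_infinite_order :: "nat \<Rightarrow> nat \<Rightarrow> (nat \<Rightarrow> cmat) \<Rightarrow> bool" where
  "G_infinite_order q r g \<longleftrightarrow>
     (\<forall>k>0. \<exists>i<q+r. mpow (g i) k \<noteq> mat 1 \<and> mpow (g i) k \<noteq> - mat 1)"

end

theory Submission imports Defs begin

lemma mpow_rec:
  assumes "det A = 1"
  shows "mpow A (Suc (Suc n)) $ i $ j = trace A * mpow A (Suc n) $ i $ j - mpow A n $ i $ j"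
proof -
  have e: "mpow A (Suc (Suc n)) = (A ** A) ** mpow A n"
    by (simp add: matrix_mul_assoc)
  have d: "A$1$1 * A$2$2 - A$1$2 * A$2$1 = 1" using assms by (simp add: det_2)
  have "\<forall>i j. ((A ** A) ** mpow A n) $ i $ j = trace A * mpow A (Suc n) $ i $ j - mpow A n $ i $ j"
    unfolding forall_2 using d
    by (simp add: matrix_matrix_mult_def sum_2 trace_def; algebra)
  then show ?thesis unfolding e by blast
qed

lemma rec_step0:
  fixes w z A B :: complex
  assumes "w * z = 1"
  shows "(w + z) * (A * w^Suc n + B * z^Suc n) - (A * w^n + B * z^n)
        = A * w^Suc (Suc n) + B * z^Suc (Suc n)"
proof -
  have "(w + z) * (A * (w * w ^ n) + B * (z * z ^ n)) = A * (w * (w * w ^ n)) + B * (z * (z * z ^ n)) + (w*z) * (A * w^n + B * z^n)"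
    by (simp add: algebra_simps)
  then show ?thesis unfolding power_Suc using assms by simp
qed

lemma rec_step:
  fixes w A B :: complex
  assumes "w \<noteq> 0"
  shows "(w + 1/w) * (A * w^Suc n + B * (1/w)^Suc n) - (A * w^n + B * (1/w)^n)
        = A * w^Suc (Suc n) + B * (1/w)^Suc (Suc n)"
  by (rule rec_step0) (use assms in simp)

lemma rec_sol:
  fixes x :: "nat \<Rightarrow> complex"
  assumes w: "w \<noteq> 0" "w^2 \<noteq> 1"
    and r: "\<And>n. x (Suc (Suc n)) = (w + 1/w) * x (Suc n) - x n"
  shows "x n = ((x 1 - x 0 / w)/(w - 1/w)) * w^n + ((w * x 0 - x 1)/(w - 1/w)) * (1/w)^n"
proof -
  have wd: "w - 1/w \<noteq> 0" using w by (auto simp: field_simps power2_eq_square)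
  let ?f = "\<lambda>n. ((x 1 - x 0 / w)/(w - 1/w)) * w^n + ((w * x 0 - x 1)/(w - 1/w)) * (1/w)^n"
  have "x n = ?f n \<and> x (Suc n) = ?f (Suc n)"
  proof (induction n)
    case 0
    have a: "?f 0 = x 0"
    proof -
      have "?f 0 = ((x 1 - x 0 / w) + (w * x 0 - x 1))/(w - 1/w)" by (simp add: add_divide_distrib[symmetric])
      also have "\<dots> = x 0 * (w - 1/w) / (w - 1/w)" by (simp add: algebra_simps)
      finally show ?thesis using wd by simp
    qed
    have b: "?f 1 = x 1"
    proof -
      have "?f 1 = ((x 1 - x 0 / w) * w + (w * x 0 - x 1) / w)/(w - 1/w)" by (simp add: add_divide_distrib divide_divide_eq_left mult.commute)
      also have "(x 1 - x 0 / w) * w + (w * x 0 - x 1) / w = x 1 * (w - 1/w)" using w by (simp add: field_simps)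
      finally show ?thesis using wd by simp
    qed
    show ?case using a b by simp
  next
    case (Suc n)
    then have "x (Suc (Suc n)) = (w + 1/w) * ?f (Suc n) - ?f n" using r by simp
    also have "\<dots> = ?f (Suc (Suc n))" by (rule rec_step[OF w(1)])
    finally show ?case using Suc by simp
  qed
  then show ?thesis by simp
qed

lemma trace_rec_right:
  assumes "det H = 1"
  shows "trace (B ** mpow H (Suc (Suc n))) = trace H * trace (B ** mpow H (Suc n)) - trace (B ** mpow H n)"
  by (simp add: trace_def matrix_matrix_mult_def sum_2 mpow_rec[OF assms] algebra_simps del: mpow.simps)

lemma trace_rec_left:
  assumes "det A = 1"
  shows "trace (mpow A (Suc (Suc n)) ** H) = trace A * trace (mpow A (Suc n) ** H) - trace (mpow A n ** H)"
  by (simp add: trace_def matrix_matrix_mult_def sum_2 mpow_rec[OF assms] algebra_simps del: mpow.simps)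

lemma trace_rec_self:
  assumes "det A = 1"
  shows "trace (mpow A (Suc (Suc n))) = trace A * trace (mpow A (Suc n)) - trace (mpow A n)"
  by (simp add: trace_def sum_2 mpow_rec[OF assms] algebra_simps del: mpow.simps)

lemma quad_root: "\<exists>w::complex. w \<noteq> 0 \<and> w + 1/w = t"
proof -
  define w where "w = (t + csqrt (t^2 - 4)) / 2"
  have "w^2 - t * w + 1 = ((t + csqrt (t^2 - 4))^2 - 2 * t * (t + csqrt (t^2 - 4)) + 4) / 4"
    by (simp add: w_def field_simps power2_eq_square)
  also have "\<dots> = ((csqrt (t^2 - 4))^2 - t^2 + 4) / 4"
    by (simp add: power2_eq_square algebra_simps)
  also have "\<dots> = 0" by (simp add: power2_csqrt)
  finally have e: "w^2 - t * w + 1 = 0" .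
  then have "w \<noteq> 0" by auto
  moreover have "w + 1/w = t" using e \<open>w \<noteq> 0\<close>
    by (simp add: field_simps power2_eq_square)
  ultimately show ?thesis by blast
qed

lemma lox_root:
  assumes "\<not> (Im t = 0 \<and> \<bar>Re t\<bar> \<le> 2)"
  shows "\<exists>w::complex. 1 < cmod w \<and> w + 1/w = t"
proof -
  obtain w where w: "w \<noteq> 0" "w + 1/w = t" using quad_root by blast
  have "cmod w \<noteq> 1"
  proof
    assume c: "cmod w = 1"
    have "1/w = cnj w" using c w(1) complex_div_cnj[of 1 w] by simp
    then have "t = w + cnj w" using w by simp
    then have "Im t = 0" "Re t = 2 * Re w" by (simp_all add: complex_add_cnj)
    moreover have "\<bar>Re w\<bar> \<le> 1" using abs_Re_le_cmod[of w] c by simp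
    ultimately show False using assms by simp
  qed
  show ?thesis
  proof (cases "1 < cmod w")
    case True then show ?thesis using w by blast
  next
    case False
    then have "cmod w < 1" using \<open>cmod w \<noteq> 1\<close> by simp
    then have "1 < cmod (1/w)" using w(1) by (simp add: norm_divide field_simps)
    moreover have "1/w + 1/(1/w) = t" using w by (simp add: add.commute)
    ultimately show ?thesis by blast
  qed
qed

lemma ell_root:
  assumes "Im s = 0" "\<bar>Re s\<bar> < 2"
  shows "\<exists>w::complex. w \<noteq> 0 \<and> w^2 \<noteq> 1 \<and> w + 1/w = s"
proof -
  obtain w where w: "w \<noteq> 0" "w + 1/w = s" using quad_root by blast
  have "w^2 \<noteq> 1"
  proof
    assume "w^2 = 1"
    then have "w = 1 \<or> w = -1" by (simp add: power2_eq_1_iff)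
    then have "s = 2 \<or> s = -2" using w by auto
    then show False using assms by auto
  qed
  then show ?thesis using w by blast
qed

lemma lox_of_big:
  assumes "2 < cmod (trace M)"
  shows "loxodromic M"
  unfolding loxodromic_def using assms cmod_eq_Re[of "trace M"] by auto

lemma grow:
  fixes x :: "nat \<Rightarrow> complex"
  assumes w: "1 < cmod w" and al: "\<alpha> \<noteq> 0"
    and x: "\<And>n. x n = \<alpha> * w^n + \<beta> * (1/w)^n"
  shows "\<exists>N. \<forall>n\<ge>N. 2 < cmod (x n)"
proof -
  obtain N where N: "(2 + cmod \<beta>) / cmod \<alpha> < cmod w ^ N"
    using real_arch_pow[OF w] by blast
  have "2 < cmod (x n)" if "N \<le> n" for n
  proof -
    have "cmod w ^ N \<le> cmod w ^ n" using w that by (simp add: power_increasing)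
    then have "cmod \<alpha> * cmod w ^ N \<le> cmod \<alpha> * cmod w ^ n" by (simp add: mult_left_mono)
    moreover have "(2 + cmod \<beta>) < cmod \<alpha> * cmod w ^ N" using N al
      by (simp add: divide_less_eq mult.commute)
    ultimately have "(2 + cmod \<beta>) < cmod \<alpha> * cmod w ^ n" by linarith
    moreover have "(1 / cmod w) ^ n \<le> 1" using w by (intro power_le_one) (auto simp: divide_le_eq)
    then have "cmod ((1/w)^n) \<le> 1"
      by (simp add: norm_power norm_divide)
    then have "cmod (\<beta> * (1/w)^n) \<le> cmod \<beta>"
      by (simp add: norm_mult mult_left_le)
    moreover have "cmod (\<alpha> * w^n) \<le> cmod (x n) + cmod (\<beta> * (1/w)^n)"
      using x[of n] norm_triangle_ineq4[of "x n" "\<beta> * (1/w)^n"] by (simp add: algebra_simps)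
    ultimately show ?thesis by (simp add: norm_mult norm_power)
  qed
  then show ?thesis by blast
qed

lemma rec_period:
  fixes x :: "nat \<Rightarrow> complex"
  assumes w: "w \<noteq> 0" "w^2 \<noteq> 1"
    and r: "\<And>n. x (Suc (Suc n)) = (w + 1/w) * x (Suc n) - x n"
    and c: "w^d = c" "c^2 = 1"
  shows "x d = c * x 0"
proof -
  have c': "(1/w)^d = c" using c by (auto simp: power_one_over power2_eq_1_iff)
  define P where "P = (x 1 - x 0 / w) / (w - 1 / w)"
  define Q where "Q = (w * x 0 - x 1) / (w - 1 / w)"
  have "x d = P * w^d + Q * (1/w)^d" using rec_sol[where x=x, OF w r, of d] unfolding P_def Q_def .
  moreover have "x 0 = P + Q" using rec_sol[where x=x, OF w r, of 0] unfolding P_def Q_def by simp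
  ultimately show ?thesis using c c' by (simp add: algebra_simps)
qed

lemma mpow_add: "mpow A (a + b) = mpow A a ** mpow A b"
  by (induction a) (simp_all add: matrix_mul_assoc)

lemma neg_mul: "(- mat 1 :: cmat) ** X = - X"
  by (simp add: vec_eq_iff matrix_matrix_mult_def sum_2 mat_def forall_2)

lemma mpow_pm:
  assumes "mpow A k = mat 1 \<or> mpow A k = - mat 1"
  shows "mpow A (k*c) = mat 1 \<or> mpow A (k*c) = - mat 1"
proof (induction c)
  case 0 then show ?case by simp
next
  case (Suc c)
  have "mpow A (k * Suc c) = mpow A k ** mpow A (k*c)"
    by (metis mpow_add mult_Suc_right)
  then show ?case using Suc assms
    by (auto simp: neg_mul)
qed

lemma trace_neg: "trace (- X :: cmat) = - trace X"
  by (simp add: trace_def sum_2)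

lemma component:
  assumes dA: "det A = 1" and dH: "det H = 1" and eA: "elliptic A" and lH: "loxodromic H"
  shows "\<exists>k>0. \<exists>b. \<forall>m. k dvd m \<and> b < m \<longrightarrow>
           (\<exists>N. \<forall>n\<ge>N. loxodromic (mpow A m ** mpow H n) \<and> loxodromic (mpow H n ** mpow A m))"
proof -
  obtain w where w: "1 < cmod w" "w + 1/w = trace H"
    using lox_root lH unfolding loxodromic_def by blast
  have w0: "w \<noteq> 0" using w by auto
  have w2: "w^2 \<noteq> 1"
  proof
    assume "w^2 = 1"
    then have "cmod w ^ 2 = 1" by (metis norm_one norm_power)
    then show False using w(1) by (simp add: power2_eq_1_iff)
  qed
  have wd: "w - 1/w \<noteq> 0"
  proof
    assume "w - 1/w = 0"
    then have "w * w = 1" using w0 by (simp add: field_simps)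
    then show False using w2 by (simp add: power2_eq_square)
  qed
  define a where "a m = trace (mpow A m ** H) - (1/w) * trace (mpow A m)" for m
  have trI: "trace (mat 1 :: cmat) = 2" by (simp add: trace_I)
  have a_pm: "a m \<noteq> 0" if "mpow A m = mat 1 \<or> mpow A m = - mat 1" for m
  proof -
    have e: "trace H - (1/w) * 2 = w - 1/w" using w(2) by (simp add: algebra_simps)
    from that have "a m = w - 1/w \<or> a m = - (w - 1/w)"
    proof
      assume "mpow A m = mat 1" then show ?thesis using e trI unfolding a_def by simp
    next
      assume "mpow A m = - mat 1" then show ?thesis using e trI unfolding a_def
        by (simp add: neg_mul trace_neg algebra_simps)
    qed
    then show ?thesis using wd by auto
  qed
  have a_big: "\<exists>N. \<forall>n\<ge>N. loxodromic (mpow A m ** mpow H n) \<and> loxodromic (mpow H n ** mpow A m)"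
    if am: "a m \<noteq> 0" for m
  proof -
    define x where "x n = trace (mpow A m ** mpow H n)" for n
    have r: "x (Suc (Suc n)) = (w + 1/w) * x (Suc n) - x n" for n
      unfolding x_def using trace_rec_right[OF dH] w(2) by simp
    have x1: "x 1 = trace (mpow A m ** H)" unfolding x_def by simp
    have x0: "x 0 = trace (mpow A m)" unfolding x_def by simp
    define \<alpha> where "\<alpha> = (x 1 - x 0 / w) / (w - 1 / w)"
    define \<beta> where "\<beta> = (w * x 0 - x 1) / (w - 1 / w)"
    have xs: "x n = \<alpha> * w^n + \<beta> * (1/w)^n" for n
      unfolding \<alpha>_def \<beta>_def by (rule rec_sol[where x=x, OF w0 w2 r])
    have "\<alpha> = a m / (w - 1/w)" unfolding \<alpha>_def a_def x1 x0 by simp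
    then have "\<alpha> \<noteq> 0" using am wd by simp
    then obtain N where N: "\<forall>n\<ge>N. 2 < cmod (x n)" using grow[OF w(1) _ xs] by blast
    show ?thesis
    proof (intro exI allI impI conjI)
      fix n assume "N \<le> n"
      then have "2 < cmod (trace (mpow A m ** mpow H n))" using N unfolding x_def by blast
      then show "loxodromic (mpow A m ** mpow H n)" "loxodromic (mpow H n ** mpow A m)"
        using lox_of_big trace_mul_sym by metis+
    qed
  qed
  show ?thesis
  proof (cases "\<exists>k>0. mpow A k = mat 1 \<or> mpow A k = - mat 1")
    case True
    then obtain k where k: "k > 0" "mpow A k = mat 1 \<or> mpow A k = - mat 1" by blast
    have "\<forall>m. k dvd m \<and> 0 < m \<longrightarrow>
           (\<exists>N. \<forall>n\<ge>N. loxodromic (mpow A m ** mpow H n) \<and> loxodromic (mpow H n ** mpow A m))"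
    proof (intro allI impI)
      fix m assume "k dvd m \<and> 0 < m"
      then obtain c where "m = k * c" by (auto elim: dvdE)
      then show "\<exists>N. \<forall>n\<ge>N. loxodromic (mpow A m ** mpow H n) \<and> loxodromic (mpow H n ** mpow A m)"
        using a_big a_pm mpow_pm[OF k(2)] by blast
    qed
    then show ?thesis using k(1) by blast
  next
    case False
    then have inf: "\<And>k. k > 0 \<Longrightarrow> mpow A k \<noteq> mat 1 \<and> mpow A k \<noteq> - mat 1" by blast
    obtain \<omega> where om: "\<omega> \<noteq> 0" "\<omega>^2 \<noteq> 1" "\<omega> + 1/\<omega> = trace A"
      using ell_root eA unfolding elliptic_def by blast
    have ra: "a (Suc (Suc n)) = (\<omega> + 1/\<omega>) * a (Suc n) - a n" for n
      unfolding a_def om(3) trace_rec_left[OF dA] trace_rec_self[OF dA] by (simp add: algebra_simps)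
    define P where "P = (a 1 - a 0 / \<omega>) / (\<omega> - 1 / \<omega>)"
    define Q where "Q = (\<omega> * a 0 - a 1) / (\<omega> - 1 / \<omega>)"
    have as: "a n = P * \<omega>^n + Q * (1/\<omega>)^n" for n
      unfolding P_def Q_def by (rule rec_sol[where x=a, OF om(1,2) ra])
    have a0: "a 0 \<noteq> 0" using a_pm[of 0] by simp
    have PQ: "a 0 = P + Q" using as[of 0] by simp
    have z2: "P * \<omega>^(2*m) + Q = 0" if "a m = 0" for m
    proof -
      have "\<omega>^m * (1/\<omega>)^m = 1" using om(1) by (simp add: power_mult_distrib[symmetric])
      then have "\<omega>^m * a m = P * \<omega>^(2*m) + Q"
        unfolding as by (simp add: algebra_simps power_mult power2_eq_square power_mult_distrib)
      then show ?thesis using that by simp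
    qed
    have key: False if z0: "a m0 = 0" and z1: "a m1 = 0" and lt: "m0 < m1" for m0 m1
    proof -
      have P0: "P \<noteq> 0" using z2[OF z0] PQ a0 by auto
      have "P * \<omega>^(2*m1) + Q = P * \<omega>^(2*m0) + Q" using z2[OF z0] z2[OF z1] by simp
      then have "P * \<omega>^(2*m1) = P * \<omega>^(2*m0)" by simp
      then have eq: "\<omega>^(2*m1) = \<omega>^(2*m0)" using P0 by simp
      define d where "d = m1 - m0"
      have dpos: "d > 0" using lt unfolding d_def by simp
      have "\<omega>^(2*m1) = \<omega>^(2*m0) * \<omega>^(2*d)" unfolding d_def using lt
        by (simp add: power_add[symmetric] diff_mult_distrib2)
      then have "\<omega>^(2*d) = 1" using eq om(1) by simp
      then have c2: "(\<omega>^d)^2 = 1" by (simp add: power_mult[symmetric] mult.commute)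
      have ent: "mpow A d $ i $ j = \<omega>^d * mat 1 $ i $ j" for i j
      proof -
        define e where "e n = mpow A n $ i $ j" for n
        have re: "e (Suc (Suc n)) = (\<omega> + 1/\<omega>) * e (Suc n) - e n" for n
          unfolding e_def using mpow_rec[OF dA] om(3) by simp
        show ?thesis using rec_period[where x=e, OF om(1,2) re refl c2] unfolding e_def by simp
      qed
      have "\<omega>^d = 1 \<or> \<omega>^d = -1" using c2 by (simp add: power2_eq_1_iff)
      then have "mpow A d = mat 1 \<or> mpow A d = - mat 1"
        using ent by (auto simp: vec_eq_iff)
      then show False using inf[OF dpos] by blast
    qed
    define b where "b = (if \<exists>m0. a m0 = 0 then (SOME m0. a m0 = 0) else 0)"
    have bgood: "a m \<noteq> 0" if "b < m" for m
    proof
      assume am: "a m = 0"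
      then have ex: "\<exists>m0. a m0 = 0" by blast
      then have "a b = 0" unfolding b_def using someI_ex[OF ex] by simp
      then show False using key[OF _ am that] by blast
    qed
    have "\<forall>m. 1 dvd m \<and> b < m \<longrightarrow>
           (\<exists>N. \<forall>n\<ge>N. loxodromic (mpow A m ** mpow H n) \<and> loxodromic (mpow H n ** mpow A m))"
      using bgood a_big by blast
    then show ?thesis by blast
  qed
qed

lemma le_sum_nat: "i < (K::nat) \<Longrightarrow> (f i :: nat) \<le> (\<Sum>j<K. f j)"
  using member_le_sum[of i "{..<K}" f] by auto

theorem lemmaL:
  fixes q r :: nat and g h :: "nat \<Rightarrow> cmat"
  assumes "inG q r g" and "inG q r h"
    and "G_elliptic q r g" and "G_infinite_order q r g"
    and "G_loxodromic q r h"
  shows "\<exists>m n. m > 0 \<and> n > 0 \<and>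
           G_loxodromic q r (G_mult (G_pow g m) (G_pow h n)) \<and>
           G_loxodromic q r (G_mult (G_pow h n) (G_pow g m))"
proof -
  define K where "K = q + r"
  have dg: "det (g i) = 1" if "i < K" for i
    using assms(1) that unfolding K_def inG_def SL2C_def SL2R_def by (cases "i < q") auto
  have dh: "det (h i) = 1" if "i < K" for i
    using assms(2) that unfolding K_def inG_def SL2C_def SL2R_def by (cases "i < q") auto
  have eg: "elliptic (g i)" if "i < K" for i using assms(3) that unfolding K_def G_elliptic_def by blast
  have lh: "loxodromic (h i)" if "i < K" for i using assms(5) that unfolding K_def G_loxodromic_def by blast
  let ?L = "\<lambda>i m n. loxodromic (mpow (g i) m ** mpow (h i) n) \<and> loxodromic (mpow (h i) n ** mpow (g i) m)"
  have "\<forall>i. \<exists>kb. i < K \<longrightarrow> fst kb > 0 \<and> (\<forall>m. fst kb dvd m \<and> snd kb < m \<longrightarrow> (\<exists>N. \<forall>n\<ge>N. ?L i m n))"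
  proof
    fix i
    show "\<exists>kb. i < K \<longrightarrow> fst kb > 0 \<and> (\<forall>m. fst kb dvd m \<and> snd kb < m \<longrightarrow> (\<exists>N. \<forall>n\<ge>N. ?L i m n))"
    proof (cases "i < K")
      case True
      from component[OF dg[OF True] dh[OF True] eg[OF True] lh[OF True]]
      obtain k b where "k > 0" "\<forall>m. k dvd m \<and> b < m \<longrightarrow> (\<exists>N. \<forall>n\<ge>N. ?L i m n)" by blast
      then show ?thesis by (intro exI[of _ "(k, b)"]) simp
    qed simp
  qed
  then obtain kb where kb: "\<And>i. i < K \<Longrightarrow> fst (kb i) > 0 \<and> (\<forall>m. fst (kb i) dvd m \<and> snd (kb i) < m \<longrightarrow> (\<exists>N. \<forall>n\<ge>N. ?L i m n))"
    by metis
  define m where "m = (\<Prod>i<K. fst (kb i)) * (1 + (\<Sum>i<K. snd (kb i)))"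
  have Ppos: "(\<Prod>i<K. fst (kb i)) > 0" using kb by (simp add: prod_pos)
  have mpos: "m > 0" unfolding m_def using Ppos by simp
  have "\<exists>N. \<forall>n\<ge>N. ?L i m n" if i: "i < K" for i
  proof -
    have "fst (kb i) dvd m" unfolding m_def using i by (intro dvd_mult2 dvd_prodI) auto
    moreover have "snd (kb i) < m"
    proof -
      have "snd (kb i) < 1 + (\<Sum>i<K. snd (kb i))" using le_sum_nat[OF i, of "\<lambda>j. snd (kb j)"] by simp
      also have "\<dots> = 1 * (1 + (\<Sum>i<K. snd (kb i)))" by simp
      also have "\<dots> \<le> m" unfolding m_def by (rule mult_le_mono1) (use Ppos in linarith)
      finally show ?thesis .
    qed
    ultimately show ?thesis using kb[OF i] by blast
  qed
  then have "\<forall>i. \<exists>N. i < K \<longrightarrow> (\<forall>n\<ge>N. ?L i m n)" by blast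
  then obtain Nf where Nf: "\<And>i n. i < K \<Longrightarrow> Nf i \<le> n \<Longrightarrow> ?L i m n" by metis
  define n where "n = 1 + (\<Sum>i<K. Nf i)"
  have "?L i m n" if "i < K" for i
  proof -
    have "Nf i \<le> n" unfolding n_def using le_sum_nat[OF that, of Nf] by simp
    then show ?thesis using Nf[OF that] by blast
  qed
  then have "G_loxodromic q r (G_mult (G_pow g m) (G_pow h n)) \<and>
           G_loxodromic q r (G_mult (G_pow h n) (G_pow g m))"
    unfolding G_loxodromic_def G_mult_def G_pow_def K_def by blast
  then show ?thesis using mpos unfolding n_def by blast
qed

end
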